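(* Let $p$ be a prime, $k$ a positive integer, and $r$ a prime power such that $p$ divides $r-1$ and $r^2+r+1$ divides $p^k+1$. Put $q=p^k$ and $d=r^2+r+1$. Let $D\subseteq\mathbb{Z}/d\mathbb{Z}$ be the Singer difference set. Let $\alpha$ be a primitive element of $\mathbb{F}_{q^2}^\times$, put $\omega=\alpha^{(q^2-1)/d}$, and for $f:\mathbb{Z}/d\mathbb{Z}\to\mathbb{F}_{q^2}$ define $(Tf)(x)=f(x-1)$ and $(Mf)(x)=\omega^x f(x)$. Then $\{M^sT^t\mathbf{1}_D\}_{s,t\in\mathbb{Z}/d\mathbb{Z}}$ is a $(2,1,2d)$-equiangular tight frame of $d^2$ vectors in $\mathbb{F}_{q^2}^d$ (parameters read in $\mathbb{F}_q$).
   Context: Vectors in $\mathbb{F}_{q^2}^d$ are identified with functions $\mathbb{Z}/d\mathbb{Z}\to\mathbb{F}_{q^2}$, and $\mathbf{1}_D$ is the indicator function of $D$. The Singer difference set is a cyclic difference set in $\mathbb{Z}/d\mathbb{Z}$ with parameters $(r^2+r+1,r+1,1)$: $|D|=r+1$ and every nonzero element of $\mathbb{Z}/d\mathbb{Z}$ can be written in exactly one way as $x-y$ with $x,y\in D$. For $a\in\mathbb{F}_{q^2}$ write $\overline{a}=a^q$, and $\langle x,y\rangle=x^*y=\sum_{z}\overline{x(z)}y(z)$. A family $\{y_j\}_{j\in[n]}$ in $\mathbb{F}_{q^2}^d$ is an $(a,b,c)$-equiangular tight frame ($a,b,c\in\mathbb{F}_q$) if it spans $\mathbb{F}_{q^2}^d$,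 $\sum_j\langle y_j,y\rangle y_j=cy$ for all $y$, $\langle y_j,y_j\rangle=a$ for all $j$, and $\langle y_j,y_\ell\rangle\langle y_\ell,y_j\rangle=b$ for all $j\neq\ell$. *)

theory Defs
  imports "HOL-Computational_Algebra.Primes" "HOL-Library.Cardinality"
begin

text \<open>Vectors in F^d are functions nat => 'a, only the coordinates z < d matter
  (Z/dZ is represented by {0..<d}).\<close>

definition herm :: "nat \<Rightarrow> nat \<Rightarrow> (nat \<Rightarrow> 'a::field) \<Rightarrow> (nat \<Rightarrow> 'a) \<Rightarrow> 'a" where
  "herm q d x y = (\<Sum>z<d. (x z) ^ q * y z)"

definition shiftT :: "nat \<Rightarrow> (nat \<Rightarrow> 'a) \<Rightarrow> nat \<Rightarrow> 'a" where
  "shiftT d f x = f ((x + d - 1) mod d)"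

definition modM :: "nat \<Rightarrow> 'a::field \<Rightarrow> (nat \<Rightarrow> 'a) \<Rightarrow> nat \<Rightarrow> 'a" where
  "modM d \<omega> f x = \<omega> ^ x * f x"

definition indic :: "nat set \<Rightarrow> nat \<Rightarrow> 'a::field" where
  "indic D x = (if x \<in> D then 1 else 0)"

definition cyclic_difference_set :: "nat \<Rightarrow> nat \<Rightarrow> nat \<Rightarrow> nat set \<Rightarrow> bool" where
  "cyclic_difference_set d k lam D \<longleftrightarrow> D \<subseteq> {..<d} \<and> card D = k \<and>
     (\<forall>z\<in>{1..<d}. card {(x, y). x \<in> D \<and> y \<in> D \<and> (x + d - y) mod d = z} = lam)"

definition prime_power :: "nat \<Rightarrow> bool" where
  "prime_power r \<longleftrightarrow> (\<exists>l m. prime l \<and> m > 0 \<and> r = l ^ m)"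

definition primitive_elem :: "'a::field \<Rightarrow> bool" where
  "primitive_elem \<alpha> \<longleftrightarrow> \<alpha> \<noteq> 0 \<and> {\<alpha> ^ n | n. True} = UNIV - {0}"

text \<open>(a,b,c)-equiangular tight frame {y j}_{j in J} in F_{q^2}^d, with a,b,c in F_q
  (i.e. fixed by the Frobenius a |-> a^q).\<close>
definition etf :: "nat \<Rightarrow> nat \<Rightarrow> 'b set \<Rightarrow> ('b \<Rightarrow> nat \<Rightarrow> 'a::field) \<Rightarrow> 'a \<Rightarrow> 'a \<Rightarrow> 'a \<Rightarrow> bool" where
  "etf q d J y a b c \<longleftrightarrow> finite J \<and> a ^ q = a \<and> b ^ q = b \<and> c ^ q = c \<and>
     (\<forall>v :: nat \<Rightarrow> 'a. \<exists>coef. \<forall>z<d. v z = (\<Sum>j\<in>J. coef j * y j z)) \<and>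
     (\<forall>v :: nat \<Rightarrow> 'a. \<forall>z<d. (\<Sum>j\<in>J. herm q d (y j) v * y j z) = c * v z) \<and>
     (\<forall>j\<in>J. herm q d (y j) (y j) = a) \<and>
     (\<forall>j\<in>J. \<forall>l\<in>J. j \<noteq> l \<longrightarrow> herm q d (y j) (y l) * herm q d (y l) (y j) = b)"

end

theory Submission
  imports Defs "HOL-Number_Theory.Residues"
begin


lemma tau_int: "t \<le> d \<Longrightarrow> int ((x + d - t) mod d) = (int x - int t) mod int d"
proof -
  assume "t \<le> d"
  then have "int (x + d - t) = (int x - int t) + int d" by simp
  then show ?thesis by (simp add: of_nat_mod)
qed

lemma tau_ex: "t \<le> d \<Longrightarrow> \<exists>j. int ((x + d - t) mod d) = int x - int t + int d * j"
proof -
  assume "t \<le> d"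
  then have "int ((x + d - t) mod d) = (int x - int t) mod int d" by (rule tau_int)
  also have "\<dots> = int x - int t + int d * (- ((int x - int t) div int d))"
    by (simp add: minus_div_mult_eq_mod[symmetric] algebra_simps)
  finally show ?thesis by blast
qed

lemma modp_ex: "\<exists>j. int ((x + y) mod d) = int x + int y + int d * j"
proof -
  have "int ((x + y) mod d) = (int x + int y) mod int d" by (simp add: of_nat_mod)
  also have "\<dots> = int x + int y + int d * (- ((int x + int y) div int d))"
    by (simp add: minus_div_mult_eq_mod[symmetric] algebra_simps)
  finally show ?thesis by blast
qed

lemma eq_of_cong: "a < d \<Longrightarrow> b < d \<Longrightarrow> int a = int b + int d * j \<Longrightarrow> a = b"
proof -
  assume a: "a < d" "b < d" "int a = int b + int d * j"
  then have "int a mod int d = (int b + int d * j) mod int d" by simp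
  then have "int a mod int d = int b mod int d" by simp
  moreover have "int a mod int d = int a" using a by (intro mod_pos_pos_trivial) auto
  moreover have "int b mod int d = int b" using a by (intro mod_pos_pos_trivial) auto
  ultimately show ?thesis by simp
qed

lemma eq_of_cong': "int a = int b + int d * j \<Longrightarrow> a < d \<Longrightarrow> b < d \<Longrightarrow> a = b"
  using eq_of_cong by blast

lemma tau_lt: "0 < (d::nat) \<Longrightarrow> (x + d - t) mod d < d" by (rule mod_less_divisor)

lemma tau_inv1: "t < (d::nat) \<Longrightarrow> a < d \<Longrightarrow> (((a + t) mod d) + d - t) mod d = a"
proof -
  assume h: "t < d" "a < d"
  obtain j1 where j1: "int ((a + t) mod d) = int a + int t + int d * j1" using modp_ex by blast
  obtain j2 where j2: "int ((((a + t) mod d) + d - t) mod d) = int ((a + t) mod d) - int t + int d * j2"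
    using tau_ex h by (meson less_imp_le)
  have "int ((((a + t) mod d) + d - t) mod d) = int a + int d * (j1 + j2)"
    using j1 j2 by (simp add: algebra_simps)
  then show ?thesis by (rule eq_of_cong') (use h in auto)
qed

lemma tau_inv2: "t < (d::nat) \<Longrightarrow> x < d \<Longrightarrow> (((x + d - t) mod d) + t) mod d = x"
proof -
  assume h: "t < d" "x < d"
  obtain j1 where j1: "int ((x + d - t) mod d) = int x - int t + int d * j1"
    using tau_ex h by (meson less_imp_le)
  obtain j2 where j2: "int ((((x + d - t) mod d) + t) mod d) = int ((x + d - t) mod d) + int t + int d * j2"
    using modp_ex by blast
  have "int ((((x + d - t) mod d) + t) mod d) = int x + int d * (j1 + j2)"
    using j1 j2 by (simp add: algebra_simps)
  then show ?thesis by (rule eq_of_cong') (use h in auto)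
qed

lemma tau_inv3: "t < (d::nat) \<Longrightarrow> z < d \<Longrightarrow> (z + d - ((z + d - t) mod d)) mod d = t"
proof -
  assume h: "t < d" "z < d"
  obtain j1 where j1: "int ((z + d - t) mod d) = int z - int t + int d * j1"
    using tau_ex h by (meson less_imp_le)
  have "(z + d - t) mod d \<le> d" using h by simp
  then obtain j2 where j2: "int ((z + d - ((z + d - t) mod d)) mod d) = int z - int ((z + d - t) mod d) + int d * j2"
    using tau_ex by blast
  have "int ((z + d - ((z + d - t) mod d)) mod d) = int t + int d * (j2 - j1)"
    using j1 j2 by (simp add: algebra_simps)
  then show ?thesis by (rule eq_of_cong') (use h in auto)
qed

lemma bij_x: "t < (d::nat) \<Longrightarrow> bij_betw (\<lambda>x. (x + d - t) mod d) {..<d} {..<d}"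
proof -
  assume h: "t < d"
  then have d0: "0 < d" by simp
  show ?thesis
  proof (rule bij_betw_byWitness[where f'="\<lambda>a. (a + t) mod d"])
    show "\<forall>a\<in>{..<d}. ((a + d - t) mod d + t) mod d = a" using tau_inv2[OF h] by blast
    show "\<forall>a\<in>{..<d}. ((a + t) mod d + d - t) mod d = a" using tau_inv1[OF h] by blast
    show "(\<lambda>x. (x + d - t) mod d) ` {..<d} \<subseteq> {..<d}" using mod_less_divisor[OF d0] by blast
    show "(\<lambda>a. (a + t) mod d) ` {..<d} \<subseteq> {..<d}" using mod_less_divisor[OF d0] by blast
  qed
qed

lemma bij_t: "z < (d::nat) \<Longrightarrow> bij_betw (\<lambda>t. (z + d - t) mod d) {..<d} {..<d}"
proof -
  assume h: "z < d"
  then have d0: "0 < d" by simp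
  show ?thesis
  proof (rule bij_betw_byWitness[where f'="\<lambda>t. (z + d - t) mod d"])
    show "\<forall>a\<in>{..<d}. (z + d - (z + d - a) mod d) mod d = a" using tau_inv3 h by blast
    then show "\<forall>a\<in>{..<d}. (z + d - (z + d - a) mod d) mod d = a" .
    show "(\<lambda>t. (z + d - t) mod d) ` {..<d} \<subseteq> {..<d}" using mod_less_divisor[OF d0] by blast
    then show "(\<lambda>t. (z + d - t) mod d) ` {..<d} \<subseteq> {..<d}" .
  qed
qed

lemma card_pre:
  assumes "bij_betw f A A" "D \<subseteq> A"
  shows "card {x\<in>A. f x \<in> D} = card D"
proof -
  have "bij_betw f {x\<in>A. f x \<in> D} D"
  proof (rule bij_betw_subset[OF assms(1)])
    show "{x \<in> A. f x \<in> D} \<subseteq> A" by blast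
    have im: "f ` A = A" using assms(1) by (rule bij_betw_imp_surj_on)
    show "f ` {x \<in> A. f x \<in> D} = D"
    proof
      show "f ` {x \<in> A. f x \<in> D} \<subseteq> D" by blast
      show "D \<subseteq> f ` {x \<in> A. f x \<in> D}"
      proof
        fix y assume "y \<in> D"
        then have "y \<in> f ` A" using im assms(2) by blast
        then obtain x where "x \<in> A" "y = f x" by blast
        then show "y \<in> f ` {x \<in> A. f x \<in> D}" using \<open>y \<in> D\<close> by blast
      qed
    qed
  qed
  then show ?thesis by (rule bij_betw_same_card)
qed

lemma inter_single:
  assumes cds: "cyclic_difference_set d kk 1 D" and h: "t < d" "t' < d" "t \<noteq> t'"
  shows "\<exists>x0. x0 < d \<and> {x\<in>{..<d}. (x + d - t) mod d \<in> D \<and> (x + d - t') mod d \<in> D} = {x0}"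
proof -
  define z where "z = (t' + d - t) mod d"
  define S where "S = {x\<in>{..<d}. (x + d - t) mod d \<in> D \<and> (x + d - t') mod d \<in> D}"
  define P where "P = {(a, b). a \<in> D \<and> b \<in> D \<and> (a + d - b) mod d = z}"
  define F where "F = (\<lambda>x. ((x + d - t) mod d, (x + d - t') mod d))"
  have Dsub: "D \<subseteq> {..<d}" using cds unfolding cyclic_difference_set_def by blast
  obtain jz where jz: "int z = int t' - int t + int d * jz" unfolding z_def using tau_ex h by (meson less_imp_le)
  have "z \<noteq> 0"
  proof
    assume "z = 0"
    then have "int t' = int t + int d * (- jz)" using jz by (simp add: algebra_simps)
    then have "t' = t" by (rule eq_of_cong') (use h in auto)
    then show False using h by simp
  qed
  moreover have "z < d" unfolding z_def using h by simp
  ultimately have "z \<in> {1..<d}" by auto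
  then have "card {(x, y). x \<in> D \<and> y \<in> D \<and> (x + d - y) mod d = z} = 1"
    using cds unfolding cyclic_difference_set_def by blast
  then have "card P = 1" unfolding P_def .
  have inj: "inj_on F S"
  proof
    fix x y assume "x \<in> S" "y \<in> S" "F x = F y"
    then have "(x + d - t) mod d = (y + d - t) mod d" "x < d" "y < d" unfolding F_def S_def by auto
    then show "x = y" using tau_inv2[OF h(1)] by metis
  qed
  have "F ` S = P"
  proof
    show "F ` S \<subseteq> P"
    proof
      fix w assume "w \<in> F ` S"
      then obtain x where x: "x \<in> S" "w = F x" by blast
      define a where "a = (x + d - t) mod d"
      define b where "b = (x + d - t') mod d"
      obtain j1 where j1: "int a = int x - int t + int d * j1" unfolding a_def using tau_ex h by (meson less_imp_le)
      obtain j2 where j2: "int b = int x - int t' + int d * j2" unfolding b_def using tau_ex h by (meson less_imp_le)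
      have "b \<le> d" unfolding b_def using h by simp
      then obtain j3 where j3: "int ((a + d - b) mod d) = int a - int b + int d * j3" using tau_ex by blast
      have "int ((a + d - b) mod d) = int z + int d * (j3 + j1 - j2 - jz)"
        using j1 j2 j3 jz by (simp add: algebra_simps)
      then have "(a + d - b) mod d = z" by (rule eq_of_cong') (use \<open>z < d\<close> h in auto)
      then show "w \<in> P" using x unfolding P_def S_def F_def a_def b_def by auto
    qed
  next
    show "P \<subseteq> F ` S"
    proof
      fix w assume "w \<in> P"
      then obtain a b where ab: "w = (a, b)" "a \<in> D" "b \<in> D" "(a + d - b) mod d = z" unfolding P_def by blast
      have ad: "a < d" "b < d" using ab Dsub by auto
      define x where "x = (a + t) mod d"
      have xd: "x < d" unfolding x_def using h by simp
      have e1: "(x + d - t) mod d = a" unfolding x_def using h ad by (intro tau_inv1)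
      obtain j1 where j1: "int x = int a + int t + int d * j1" unfolding x_def using modp_ex by blast
      obtain j2 where j2: "int ((x + d - t') mod d) = int x - int t' + int d * j2" using tau_ex h by (meson less_imp_le)
      obtain j3 where j3: "int ((a + d - b) mod d) = int a - int b + int d * j3" using tau_ex ad by (meson less_imp_le)
      have "int ((x + d - t') mod d) = int b + int d * (j1 + j2 - j3 + jz)"
        using j1 j2 j3 jz ab(4) by (simp add: algebra_simps)
      then have e2: "(x + d - t') mod d = b" by (rule eq_of_cong') (use h ad in auto)
      have "x \<in> S" unfolding S_def using xd e1 e2 ab by auto
      moreover have "w = F x" unfolding F_def using e1 e2 ab by simp
      ultimately show "w \<in> F ` S" by blast
    qed
  qed
  then have "card S = 1" using card_image[OF inj] \<open>card P = 1\<close> by simp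
  then obtain x0 where "S = {x0}" by (rule card_1_singletonE)
  then show ?thesis unfolding S_def by auto
qed

lemma bij_add: "t < (d::nat) \<Longrightarrow> bij_betw (\<lambda>a. (a + t) mod d) {..<d} {..<d}"
proof -
  assume h: "t < d"
  then have d0: "0 < d" by simp
  show ?thesis
  proof (rule bij_betw_byWitness[where f'="\<lambda>x. (x + d - t) mod d"])
    show "\<forall>a\<in>{..<d}. ((a + t) mod d + d - t) mod d = a" using tau_inv1[OF h] by blast
    show "\<forall>a\<in>{..<d}. ((a + d - t) mod d + t) mod d = a" using tau_inv2[OF h] by blast
    show "(\<lambda>a. (a + t) mod d) ` {..<d} \<subseteq> {..<d}" using mod_less_divisor[OF d0] by blast
    show "(\<lambda>x. (x + d - t) mod d) ` {..<d} \<subseteq> {..<d}" using mod_less_divisor[OF d0] by blast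
  qed
qed

lemma dvd_lin:
  assumes "(d::nat) dvd Q + 1" "x < d" "z < d"
  shows "d dvd x * Q + z \<longleftrightarrow> x = z"
proof -
  obtain c where c: "Q + 1 = d * c" using assms(1) by blast
  have xc: "x * Q + x = d * (x * c)"
  proof -
    have "x * Q + x = x * (Q + 1)" by simp
    also have "\<dots> = d * (x * c)" using c by simp
    finally show ?thesis .
  qed
  show ?thesis
  proof
    assume "d dvd x * Q + z"
    then obtain m where m: "x * Q + z = d * m" by blast
    have "int z = int x + int d * (int m - int x * int c)"
    proof -
      have "int x * int Q + int z = int d * int m" using arg_cong[OF m, of int] by simp
      moreover have "int x * int Q + int x = int d * (int x * int c)" using arg_cong[OF xc, of int] by simp
      ultimately show ?thesis by (simp add: algebra_simps)
    qed
    then show "x = z" using assms by (intro eq_of_cong'[symmetric]) auto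
  next
    assume "x = z"
    then show "d dvd x * Q + z" using xc by simp
  qed
qed

lemma key_cong:
  fixes A B Z a b t s s' q d :: int
  assumes "[A = a + t] (mod d)" "[B = b + t] (mod d)" "[Z = a - b] (mod d)" "[q = -1] (mod d)"
  shows "[A * (s*q + s') + B * (s'*q + s) = Z * (s' + s*(d-1))] (mod d)"
proof -
  have dd: "[d = 0] (mod d)" by (simp add: cong_def)
  have 1: "[A * (s*q + s') + B * (s'*q + s) = (a+t)*(s*(-1)+s') + (b+t)*(s'*(-1)+s)] (mod d)"
    by (intro cong_add cong_mult cong_refl assms)
  have 2: "[Z * (s' + s*(d-1)) = (a-b)*(s' + s*(0-1))] (mod d)"
    by (intro cong_add cong_mult cong_refl assms cong_diff dd)
  have 3: "(a+t)*(s*(-1)+s') + (b+t)*(s'*(-1)+s) = (a-b)*(s' + s*(0-1))" by (simp add: algebra_simps)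
  from 1 have "[A * (s*q + s') + B * (s'*q + s) = (a-b)*(s' + s*(0-1))] (mod d)" by (simp only: 3)
  then show ?thesis by (rule cong_trans[OF _ cong_sym[OF 2]])
qed

lemma cong_of_ex: "int A = int a + int t + int d * j \<Longrightarrow> [int A = int a + int t] (mod int d)"
proof -
  assume h: "int A = int a + int t + int d * j"
  show ?thesis unfolding cong_def h by simp
qed

lemma diff_sum:
  fixes g :: "nat \<Rightarrow> 'b::comm_ring_1"
  assumes cds: "cyclic_difference_set d kk 1 D" and d0: "0 < d"
  shows "(\<Sum>a\<in>D. \<Sum>b\<in>D. g ((a + d - b) mod d)) = of_nat kk * g 0 + (\<Sum>z\<in>{1..<d}. g z)"
proof -
  have Dsub: "D \<subseteq> {..<d}" and cD: "card D = kk"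
    and cz: "\<forall>z\<in>{1..<d}. card {(x, y). x \<in> D \<and> y \<in> D \<and> (x + d - y) mod d = z} = 1"
    using cds unfolding cyclic_difference_set_def by auto
  have fD: "finite D" using Dsub finite_subset by blast
  define H where "H = (\<lambda>(a::nat, b::nat). (a + d - b) mod d)"
  define S where "S = (\<lambda>z. {w \<in> D \<times> D. H w = z})"
  have "(\<Sum>a\<in>D. \<Sum>b\<in>D. g ((a + d - b) mod d)) = (\<Sum>w\<in>D \<times> D. g (H w))"
    unfolding H_def by (simp add: sum.cartesian_product case_prod_beta)
  also have "\<dots> = (\<Sum>z\<in>{..<d}. \<Sum>w\<in>S z. g (H w))"
    unfolding S_def
  proof (rule sum.group[symmetric])
    show "finite (D \<times> D)" using fD by simp
    show "finite {..<d}" by simp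
    show "H ` (D \<times> D) \<subseteq> {..<d}" unfolding H_def using mod_less_divisor[OF d0] by auto
  qed
  also have "\<dots> = (\<Sum>z\<in>{..<d}. of_nat (card (S z)) * g z)"
  proof (rule sum.cong[OF refl])
    fix z assume "z \<in> {..<d}"
    have "(\<Sum>w\<in>S z. g (H w)) = (\<Sum>w\<in>S z. g z)" by (rule sum.cong) (auto simp: S_def)
    then show "(\<Sum>w\<in>S z. g (H w)) = of_nat (card (S z)) * g z" by simp
  qed
  also have "{..<d} = insert 0 {1..<d}" using d0 by auto
  also have "(\<Sum>z\<in>insert 0 {1..<d}. of_nat (card (S z)) * g z)
      = of_nat (card (S 0)) * g 0 + (\<Sum>z\<in>{1..<d}. of_nat (card (S z)) * g z)"
    by (rule sum.insert) auto
  also have "card (S 0) = kk"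
  proof -
    have "S 0 = (\<lambda>a. (a, a)) ` D"
    proof
      show "S 0 \<subseteq> (\<lambda>a. (a, a)) ` D"
      proof
        fix w assume "w \<in> S 0"
        then obtain a b where ab: "w = (a, b)" "a \<in> D" "b \<in> D" "(a + d - b) mod d = 0"
          unfolding S_def H_def by auto
        have "b \<le> d" using ab Dsub by auto
        then obtain j where "int ((a + d - b) mod d) = int a - int b + int d * j" using tau_ex by blast
        then have "int a = int b + int d * (- j)" using ab by simp
        then have "a = b" by (rule eq_of_cong') (use ab Dsub in auto)
        then show "w \<in> (\<lambda>a. (a, a)) ` D" using ab by auto
      qed
      show "(\<lambda>a. (a, a)) ` D \<subseteq> S 0" unfolding S_def H_def by auto
    qed
    moreover have "inj_on (\<lambda>a. (a, a)) D" by (auto simp: inj_on_def)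
    ultimately show ?thesis using card_image cD by metis
  qed
  also have "(\<Sum>z\<in>{1..<d}. of_nat (card (S z)) * g z) = (\<Sum>z\<in>{1..<d}. g z)"
  proof (rule sum.cong[OF refl])
    fix z assume z: "z \<in> {1..<d}"
    have "S z = {(x, y). x \<in> D \<and> y \<in> D \<and> (x + d - y) mod d = z}" unfolding S_def H_def by auto
    then have "card (S z) = 1" using cz z by simp
    then show "of_nat (card (S z)) * g z = g z" by simp
  qed
  finally show ?thesis .
qed


lemma funpow_modM: "(modM d \<omega> ^^ s) f x = \<omega>^(x*s) * f x"
  by (induction s) (simp_all add: modM_def power_add mult_ac)

lemma funpow_shiftT: "x < d \<Longrightarrow> t \<le> d \<Longrightarrow> (shiftT d ^^ t) f x = f ((x + d - t) mod d)"
proof (induction t arbitrary: x)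
  case 0
  then show ?case by simp
next
  case (Suc t)
  have "(shiftT d ^^ Suc t) f x = (shiftT d ^^ t) f ((x + d - 1) mod d)"
    by (simp add: shiftT_def)
  also have "\<dots> = f ((((x + d - 1) mod d) + d - t) mod d)"
    using Suc by simp
  also have "(((x + d - 1) mod d) + d - t) mod d = (x + d - Suc t) mod d"
  proof -
    have "int ((((x + d - 1) mod d) + d - t) mod d) = (int ((x + d - 1) mod d) - int t) mod int d"
      using Suc by (intro tau_int) auto
    also have "\<dots> = ((int x - 1) mod int d - int t) mod int d"
      using Suc tau_int[of 1 d x] by simp
    also have "\<dots> = (int x - int (Suc t)) mod int d"
      by (simp add: mod_diff_left_eq algebra_simps)
    also have "\<dots> = int ((x + d - Suc t) mod d)"
      using Suc by (intro tau_int[symmetric]) auto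
    finally show ?thesis by simp
  qed
  finally show ?case .
qed


lemma fermat_field:
  fixes x :: "'a::{field,finite}"
  assumes "x \<noteq> 0"
  shows "x ^ (CARD('a) - 1) = 1"
proof -
  have "x * (\<Prod>y\<in>UNIV-{0}. x * y) = x * x ^ (card (UNIV :: 'a set) - 1) * \<Prod>(UNIV-{0})"
    by (simp add: prod.distrib mult_ac)
  also have "(\<Prod>y\<in>UNIV-{0}. x * y) = (\<Prod>y\<in>UNIV-{0}. y)"
    by (rule prod.reindex_bij_witness[of _ "\<lambda>y. y / x" "\<lambda>y. x * y"]) (use assms in auto)
  finally have "x * \<Prod>(UNIV-{0::'a}) = (x * x ^ (CARD('a) - 1)) * \<Prod>(UNIV-{0::'a})" .
  moreover have "\<Prod>(UNIV-{0::'a}) \<noteq> 0" by simp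
  ultimately show ?thesis using assms by simp
qed

locale etfset =
  fixes p k r q d :: nat and D :: "nat set" and \<alpha> \<omega> :: "'a::{field,finite}"
  assumes pp: "prime p" and kp: "k > 0" and rpp: "prime_power r"
    and pr: "p dvd r - 1" and ddvd: "(r^2 + r + 1) dvd p^k + 1"
    and qdef: "q = p ^ k" and ddef: "d = r^2 + r + 1"
    and card: "CARD('a) = q^2"
    and cds: "cyclic_difference_set d (r + 1) 1 D"
    and prim: "primitive_elem \<alpha>"
    and omdef: "\<omega> = \<alpha> ^ ((q^2 - 1) div d)"
begin

lemma r2: "r \<ge> 2"
proof -
  obtain l m where l: "prime l" "m > 0" "r = l ^ m" using rpp unfolding prime_power_def by blast
  have "l \<ge> 2" using l(1) by (rule prime_ge_2_nat)
  moreover have "l \<le> l ^ m" using l(2) \<open>l \<ge> 2\<close> by (simp add: self_le_power)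
  ultimately show ?thesis using l(3) by linarith
qed

lemma d7: "d \<ge> 7"
proof -
  have "r^2 \<ge> 2^2" using r2 by (intro power_mono) auto
  then show ?thesis using ddef r2 by simp
qed

lemma q2: "q \<ge> 2"
proof -
  have "p \<ge> 2" using pp by (rule prime_ge_2_nat)
  moreover have "p \<le> p ^ k" using kp \<open>p \<ge> 2\<close> by (simp add: self_le_power)
  ultimately show ?thesis using qdef by linarith
qed

lemma dq1: "d dvd q + 1" using ddvd qdef ddef by simp

lemma CHAR_p: "CHAR('a) = p"
proof -
  have pos: "CHAR('a) > 0" by (rule finite_imp_CHAR_pos) simp
  then have pc: "prime CHAR('a)" by (rule prime_CHAR_semidom)
  have "CHAR('a) dvd p ^ (2*k)" using CHAR_dvd_CARD[where 'a='a] card qdef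
    by (simp add: power_mult mult.commute)
  then have "CHAR('a) dvd p" using pc prime_dvd_power by blast
  then show ?thesis using pc pp by (simp add: primes_dvd_imp_eq)
qed

lemma frob: "((x::'a) + y) ^ q = x ^ q + y ^ q"
  by (rule freshmans_dream') (simp_all add: CHAR_p qdef pp)

lemma of_nat_frob: "(of_nat n :: 'a) ^ q = of_nat n"
proof (induction n)
  case 0 then show ?case using q2 by simp
next
  case (Suc n) then show ?case by (simp add: frob)
qed

lemma of_nat_0_iff: "(of_nat n :: 'a) = 0 \<longleftrightarrow> p dvd n"
  using of_nat_eq_0_iff_char_dvd[where 'a='a] CHAR_p by simp

lemma d_ne0: "(of_nat d :: 'a) \<noteq> 0"
proof
  assume "(of_nat d :: 'a) = 0"
  then have "p dvd d" using of_nat_0_iff[of d] by blast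
  moreover have "d dvd p^k + 1" using ddvd ddef by blast
  ultimately have h: "p dvd p^k + 1" by (rule dvd_trans)
  have "p dvd p^k" using kp dvd_power[of k p] by blast
  then have "p dvd 1" using h dvd_add_right_iff[of p "p^k" 1] by blast
  then show False using pp not_prime_unit by blast
qed

lemma r_one: "(of_nat r :: 'a) = 1"
proof -
  have z: "(of_nat (r - 1) :: 'a) = 0" by (rule of_nat_0_iff[of "r-1", THEN iffD2, OF pr])
  have e: "Suc (r - 1) = r" using r2 by linarith
  have "(of_nat r :: 'a) = 1 + of_nat (r - 1)" using of_nat_Suc[of "r-1"] by (simp only: e)
  also have "\<dots> = 1" by (simp only: z add_0_right)
  finally show ?thesis .
qed

lemma r_two: "(of_nat (r+1) :: 'a) = 2"
  using r_one by (simp only: of_nat_add of_nat_1 one_add_one)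

lemma N_pos: "q^2 - 1 > 0"
proof -
  have "q^2 \<ge> 2^2" using q2 by (intro power_mono) auto
  then show ?thesis by simp
qed

lemma alpha_ne0: "\<alpha> \<noteq> 0" using prim unfolding primitive_elem_def by blast

lemma alpha_N: "\<alpha> ^ (q^2 - 1) = 1"
  using fermat_field[OF alpha_ne0] card by simp

lemma alpha_ord: "\<alpha> ^ n = 1 \<longleftrightarrow> (q^2 - 1) dvd n"
proof
  assume "(q^2 - 1) dvd n"
  then obtain c where "n = (q^2 - 1) * c" by blast
  then show "\<alpha> ^ n = 1" by (simp only: power_mult alpha_N power_one)
next
  assume an: "\<alpha> ^ n = 1"
  define N where "N = q^2 - 1"
  define m where "m = n mod N"
  have "n = N * (n div N) + m" unfolding m_def by simp
  then have "\<alpha> ^ n = (\<alpha> ^ N) ^ (n div N) * \<alpha> ^ m" by (metis power_add power_mult)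
  then have am: "\<alpha> ^ m = 1" using an alpha_N N_def by simp
  have "m = 0"
  proof (rule ccontr)
    assume "m \<noteq> 0"
    have "UNIV - {0} \<subseteq> (\<lambda>j. \<alpha> ^ j) ` {..<m}"
    proof
      fix x :: 'a assume "x \<in> UNIV - {0}"
      then obtain j where j: "x = \<alpha> ^ j" using prim unfolding primitive_elem_def by blast
      have "j = m * (j div m) + j mod m" by simp
      then have "\<alpha> ^ j = (\<alpha> ^ m) ^ (j div m) * \<alpha> ^ (j mod m)" by (metis power_add power_mult)
      then have "x = \<alpha> ^ (j mod m)" using am j by simp
      moreover have "j mod m < m" using \<open>m \<noteq> 0\<close> by simp
      ultimately show "x \<in> (\<lambda>j. \<alpha> ^ j) ` {..<m}" by blast
    qed
    then have "card (UNIV - {0::'a}) \<le> card ((\<lambda>j. \<alpha> ^ j) ` {..<m})"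
      by (intro card_mono) auto
    also have "\<dots> \<le> m" using card_image_le[of "{..<m}" "\<lambda>j. \<alpha> ^ j"] by simp
    also have "m < N" unfolding m_def using N_pos N_def by simp
    finally have "card (UNIV - {0::'a}) < N" .
    moreover have "card (UNIV - {0::'a}) = N" using card N_def by (simp add: card_Diff_singleton)
    ultimately show False by simp
  qed
  then show "(q^2 - 1) dvd n" unfolding m_def N_def by (simp add: mod_eq_0_iff_dvd)
qed

lemma d_dvd_N: "d dvd q^2 - 1"
proof -
  have "q^2 - 1 = (q + 1) * (q - 1)" using q2 by (cases q) (auto simp: power2_eq_square)
  then show ?thesis using dq1 by (metis dvd_mult2)
qed

definition m0 where "m0 = (q^2 - 1) div d"

lemma N_eq: "q^2 - 1 = d * m0" unfolding m0_def using d_dvd_N by simp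

lemma m0_pos: "m0 > 0" using N_eq N_pos by (cases m0) auto

lemma om_one: "\<omega> ^ n = 1 \<longleftrightarrow> d dvd n"
proof -
  have "\<omega> ^ n = \<alpha> ^ (m0 * n)" unfolding omdef m0_def by (simp add: power_mult)
  then have "\<omega> ^ n = 1 \<longleftrightarrow> d * m0 dvd m0 * n" using alpha_ord N_eq by simp
  also have "\<dots> \<longleftrightarrow> d dvd n" using m0_pos by (simp add: mult.commute)
  finally show ?thesis .
qed

lemma om_d: "\<omega> ^ d = 1" using om_one by simp

lemma om_ne0: "\<omega> \<noteq> 0" using om_d d7 by (metis power_0_left not_one_le_zero zero_neq_one linorder_not_le le_numeral_extra(2) not_numeral_le_zero) 

lemma om_mod: "\<omega> ^ n = \<omega> ^ (n mod d)"
proof -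
  have "n = d * (n div d) + n mod d" by simp
  then have "\<omega> ^ n = (\<omega> ^ d) ^ (n div d) * \<omega> ^ (n mod d)" by (metis power_add power_mult)
  then show ?thesis using om_d by simp
qed

lemma om_cong: "n mod d = m mod d \<Longrightarrow> \<omega> ^ n = \<omega> ^ m"
  using om_mod[of n] om_mod[of m] by simp

lemma om_cong_int: "[int n = int m] (mod int d) \<Longrightarrow> \<omega> ^ n = \<omega> ^ m"
proof -
  assume "[int n = int m] (mod int d)"
  then have "int (n mod d) = int (m mod d)" by (simp add: cong_def of_nat_mod)
  then show ?thesis by (intro om_cong) simp
qed

lemma geom: "(\<Sum>s<d. \<omega> ^ (s * e)) = (if d dvd e then of_nat d else 0)"
proof -
  have "(\<Sum>s<d. \<omega> ^ (s * e)) = (\<Sum>s<d. (\<omega> ^ e) ^ s)"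
    by (intro sum.cong refl) (metis power_mult mult.commute)
  also have "\<dots> = (if d dvd e then of_nat d else 0)"
  proof (cases "d dvd e")
    case True
    then have "\<omega> ^ e = 1" using om_one by simp
    then show ?thesis using True by simp
  next
    case False
    then have "\<omega> ^ e \<noteq> 1" using om_one by simp
    moreover have "(\<omega> ^ e) ^ d = 1" using om_d by (metis power_mult mult.commute power_one)
    ultimately show ?thesis using False by (simp add: sum_gp_strict)
  qed
  finally show ?thesis .
qed

lemma om_q1: "\<omega> ^ (n * (q + 1)) = 1"
  by (simp only: om_one) (rule dvd_mult[OF dq1])

lemma d0: "0 < d" using d7 by simp
lemma Dsub: "D \<subseteq> {..<d}" using cds unfolding cyclic_difference_set_def by blast
lemma cardD: "card D = r + 1" using cds unfolding cyclic_difference_set_def by blast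
lemma finD: "finite D" using Dsub finite_subset by blast

definition I :: "nat \<Rightarrow> nat \<Rightarrow> 'a" where "I t x = indic D ((x + d - t) mod d)"
definition Y :: "nat \<Rightarrow> nat \<Rightarrow> nat \<Rightarrow> 'a" where "Y s t x = \<omega> ^ (x * s) * I t x"

lemma yy_eq: "t < d \<Longrightarrow> x < d \<Longrightarrow> ((modM d \<omega> ^^ s) ((shiftT d ^^ t) (indic D))) x = Y s t x"
  by (simp add: funpow_modM funpow_shiftT Y_def I_def)

lemma indic_pow: "(indic D x :: 'a) ^ q = indic D x"
  using q2 by (simp add: indic_def)

lemma I_pow: "I t x ^ q = I t x" unfolding I_def by (rule indic_pow)

lemma I_sq: "I t x * I t x = I t x" by (simp add: I_def indic_def)

lemma sum_indic_mult: "(\<Sum>a<d. f a * indic D a) = (\<Sum>a\<in>D. (f a :: 'a))"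
proof -
  have "(\<Sum>a<d. f a * indic D a) = (\<Sum>a\<in>D. f a * indic D a)"
    by (rule sum.mono_neutral_right) (use Dsub in \<open>auto simp: indic_def\<close>)
  also have "\<dots> = (\<Sum>a\<in>D. f a)" by (rule sum.cong) (auto simp: indic_def)
  finally show ?thesis .
qed

lemma sum_indic: "(\<Sum>a<d. indic D a :: 'a) = 2"
proof -
  have "(\<Sum>a<d. indic D a :: 'a) = (\<Sum>a<d. 1 * indic D a)" by simp
  also have "\<dots> = (\<Sum>a\<in>D. 1)" by (rule sum_indic_mult)
  also have "\<dots> = of_nat (r + 1)" using cardD by simp
  finally show ?thesis using r_two by simp
qed

lemma sumI_t: "z < d \<Longrightarrow> (\<Sum>t<d. I t z) = 2"
proof -
  assume "z < d"
  then have "bij_betw (\<lambda>t. (z + d - t) mod d) {..<d} {..<d}" by (rule bij_t)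
  from sum.reindex_bij_betw[OF this, of "indic D :: nat \<Rightarrow> 'a"] show ?thesis unfolding I_def using sum_indic by simp
qed

lemma sumI_x: "t < d \<Longrightarrow> (\<Sum>x<d. I t x) = 2"
proof -
  assume "t < d"
  then have "bij_betw (\<lambda>x. (x + d - t) mod d) {..<d} {..<d}" by (rule bij_x)
  from sum.reindex_bij_betw[OF this, of "indic D :: nat \<Rightarrow> 'a"] show ?thesis unfolding I_def using sum_indic by simp
qed

lemma herm_Y: "herm q d (Y s t) w = (\<Sum>x<d. \<omega> ^ (x * s * q) * I t x * w x)"
  unfolding herm_def Y_def by (rule sum.cong) (simp_all add: power_mult_distrib I_pow power_mult)

lemma herm_Y2: "herm q d (Y s t) (Y s' t') = (\<Sum>x<d. \<omega> ^ (x * (s * q + s')) * (I t x * I t' x))"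
  unfolding herm_Y Y_def by (rule sum.cong) (simp_all add: power_add algebra_simps)

lemma self_norm: "t < d \<Longrightarrow> herm q d (Y s t) (Y s t) = 2"
proof -
  assume h: "t < d"
  have "herm q d (Y s t) (Y s t) = (\<Sum>x<d. I t x)"
    unfolding herm_Y2
  proof (rule sum.cong[OF refl])
    fix x
    have "x * (s * q + s) = (x * s) * (q + 1)" by (simp add: algebra_simps)
    then have "\<omega> ^ (x * (s * q + s)) = 1" using om_q1 by simp
    then show "\<omega> ^ (x * (s * q + s)) * (I t x * I t x) = I t x" by (simp add: I_sq)
  qed
  then show ?thesis using sumI_x h by simp
qed

lemma cross_diff_t:
  assumes h: "t < d" "t' < d" "t \<noteq> t'"
  shows "herm q d (Y s t) (Y s' t') * herm q d (Y s' t') (Y s t) = 1"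
proof -
  obtain x0 where x0: "x0 < d" "{x\<in>{..<d}. (x + d - t) mod d \<in> D \<and> (x + d - t') mod d \<in> D} = {x0}"
    using inter_single[OF cds h] by blast
  have II: "x < d \<Longrightarrow> I t x * I t' x = (if x = x0 then 1 else 0)" for x
  proof -
    assume "x < d"
    then have "(x + d - t) mod d \<in> D \<and> (x + d - t') mod d \<in> D \<longleftrightarrow> x = x0" using x0(2) by blast
    then show ?thesis by (auto simp: I_def indic_def)
  qed
  have 1: "herm q d (Y s t) (Y s' t') = \<omega> ^ (x0 * (s * q + s'))"
  proof -
    have "herm q d (Y s t) (Y s' t') = (\<Sum>x<d. if x = x0 then \<omega> ^ (x * (s * q + s')) else 0)"
      unfolding herm_Y2 by (rule sum.cong) (simp_all add: II)
    then show ?thesis using x0 by simp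
  qed
  have 2: "herm q d (Y s' t') (Y s t) = \<omega> ^ (x0 * (s' * q + s))"
  proof -
    have "herm q d (Y s' t') (Y s t) = (\<Sum>x<d. if x = x0 then \<omega> ^ (x * (s' * q + s)) else 0)"
      unfolding herm_Y2 by (rule sum.cong) (simp_all add: II mult.commute[of "I t' _"])
    then show ?thesis using x0 by simp
  qed
  have "x0 * (s * q + s') + x0 * (s' * q + s) = (x0 * (s + s')) * (q + 1)" by (simp add: algebra_simps)
  then show ?thesis unfolding 1 2 using om_q1 by (simp flip: power_add)
qed

lemma herm_same_t: "t < d \<Longrightarrow> herm q d (Y s t) (Y s' t) = (\<Sum>a\<in>D. \<omega> ^ (((a + t) mod d) * (s * q + s')))"
proof -
  assume h: "t < d"
  have "herm q d (Y s t) (Y s' t) = (\<Sum>x<d. \<omega> ^ (x * (s * q + s')) * I t x)"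
    unfolding herm_Y2 by (simp add: I_sq)
  also have "\<dots> = (\<Sum>a<d. \<omega> ^ (((a + t) mod d) * (s * q + s')) * I t ((a + t) mod d))"
    using sum.reindex_bij_betw[OF bij_add[OF h], of "\<lambda>x. \<omega> ^ (x * (s * q + s')) * I t x"] by simp
  also have "\<dots> = (\<Sum>a<d. \<omega> ^ (((a + t) mod d) * (s * q + s')) * indic D a)"
    by (rule sum.cong) (simp_all add: I_def tau_inv1 h)
  also have "\<dots> = (\<Sum>a\<in>D. \<omega> ^ (((a + t) mod d) * (s * q + s')))" by (rule sum_indic_mult)
  finally show ?thesis .
qed

lemma cong_of_lin: "(X::int) = U + M * j \<Longrightarrow> [X = U] (mod M)"
  by (simp add: cong_def)

lemma exp_cong:
  assumes a: "a < d" and b: "b < d" and h: "t < d"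
  shows "\<omega> ^ (((a + t) mod d) * (s * q + s') + ((b + t) mod d) * (s' * q + s))
       = \<omega> ^ (((a + d - b) mod d) * (s' + s * (d - 1)))"
proof (rule om_cong_int)
  obtain j1 where j1: "int ((a + t) mod d) = int a + int t + int d * j1" using modp_ex by blast
  obtain j2 where j2: "int ((b + t) mod d) = int b + int t + int d * j2" using modp_ex by blast
  obtain j3 where j3: "int ((a + d - b) mod d) = int a - int b + int d * j3" using tau_ex b by (meson less_imp_le)
  obtain c where c: "q + 1 = d * c" using dq1 by blast
  have cq: "int q = - 1 + int d * int c" using arg_cong[OF c, of int] by simp
  have "[int ((a + t) mod d) * (int s * int q + int s') + int ((b + t) mod d) * (int s' * int q + int s)
        = int ((a + d - b) mod d) * (int s' + int s * (int d - 1))] (mod int d)"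
  proof (rule key_cong)
    show "[int ((a + t) mod d) = int a + int t] (mod int d)" using j1 by (rule cong_of_lin)
    show "[int ((b + t) mod d) = int b + int t] (mod int d)" using j2 by (rule cong_of_lin)
    show "[int ((a + d - b) mod d) = int a - int b] (mod int d)" using j3 by (rule cong_of_lin)
    show "[int q = - 1] (mod int d)" using cq by (rule cong_of_lin)
  qed
  moreover have "int (d - 1) = int d - 1" using d0 by simp
  ultimately show "[int (((a + t) mod d) * (s * q + s') + ((b + t) mod d) * (s' * q + s))
       = int (((a + d - b) mod d) * (s' + s * (d - 1)))] (mod int d)"
    by (simp only: of_nat_add of_nat_mult)
qed

lemma ne_e:
  assumes h: "s < d" "s' < d" "s \<noteq> s'"
  shows "\<not> d dvd (s' + s * (d - 1))"
proof
  assume "d dvd (s' + s * (d - 1))"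
  then obtain m where m: "s' + s * (d - 1) = d * m" by blast
  have di: "int (d - 1) = int d - 1" using d0 by simp
  from arg_cong[OF m, of int] have "int s' + int s * (int d - 1) = int d * int m"
    by (simp only: of_nat_add of_nat_mult di)
  then have "int s' = int s + int d * (int m - int s)" by (simp add: algebra_simps)
  then have "s' = s" by (rule eq_of_cong') (use h in auto)
  then show False using h by simp
qed

lemma sum_1d:
  assumes "\<not> d dvd e"
  shows "(\<Sum>z\<in>{1..<d}. \<omega> ^ (z * e)) = - 1"
proof -
  have "{..<d} = insert 0 {1..<d}" using d0 by auto
  then have "(\<Sum>z<d. \<omega> ^ (z * e)) = \<omega> ^ (0 * e) + (\<Sum>z\<in>{1..<d}. \<omega> ^ (z * e))" by simp
  then have "1 + (\<Sum>z\<in>{1..<d}. \<omega> ^ (z * e)) = 0" using geom[of e] assms by simp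
  then show ?thesis by (simp only: add_eq_0_iff)
qed

lemma cross_same_t:
  assumes h: "t < d" "s < d" "s' < d" "s \<noteq> s'"
  shows "herm q d (Y s t) (Y s' t) * herm q d (Y s' t) (Y s t) = 1"
proof -
  define e where "e = s' + s * (d - 1)"
  have ne: "\<not> d dvd e" unfolding e_def using ne_e h by blast
  have "herm q d (Y s t) (Y s' t) * herm q d (Y s' t) (Y s t)
      = (\<Sum>a\<in>D. \<omega> ^ (((a + t) mod d) * (s * q + s'))) * (\<Sum>b\<in>D. \<omega> ^ (((b + t) mod d) * (s' * q + s)))"
    using herm_same_t[OF h(1)] by simp
  also have "\<dots> = (\<Sum>a\<in>D. \<Sum>b\<in>D. \<omega> ^ (((a + t) mod d) * (s * q + s')) * \<omega> ^ (((b + t) mod d) * (s' * q + s)))"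
    by (rule sum_product)
  also have "\<dots> = (\<Sum>a\<in>D. \<Sum>b\<in>D. \<omega> ^ (((a + d - b) mod d) * e))"
  proof (rule sum.cong[OF refl], rule sum.cong[OF refl])
    fix a b assume "a \<in> D" "b \<in> D"
    then have ab: "a < d" "b < d" using Dsub by auto
    have "\<omega> ^ (((a + t) mod d) * (s * q + s')) * \<omega> ^ (((b + t) mod d) * (s' * q + s))
        = \<omega> ^ (((a + t) mod d) * (s * q + s') + ((b + t) mod d) * (s' * q + s))"
      by (simp only: power_add)
    also have "\<dots> = \<omega> ^ (((a + d - b) mod d) * e)" unfolding e_def by (rule exp_cong[OF ab h(1)])
    finally show "\<omega> ^ (((a + t) mod d) * (s * q + s')) * \<omega> ^ (((b + t) mod d) * (s' * q + s))
          = \<omega> ^ (((a + d - b) mod d) * e)" .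
  qed
  also have "\<dots> = of_nat (r + 1) * \<omega> ^ (0 * e) + (\<Sum>z\<in>{1..<d}. \<omega> ^ (z * e))"
    by (rule diff_sum[OF cds d0])
  also have "(\<Sum>z\<in>{1..<d}. \<omega> ^ (z * e)) = - 1" using sum_1d ne by blast
  finally show ?thesis using r_one by simp
qed

lemma frame:
  assumes z: "z < d"
  shows "(\<Sum>(s, t)\<in>{..<d} \<times> {..<d}. herm q d (Y s t) v * Y s t z) = of_nat (2 * d) * v z"
proof -
  define G where "G = (\<lambda>t x. I t x * I t z * v x)"
  have step1: "herm q d (Y s t) v * Y s t z = (\<Sum>x<d. G t x * \<omega> ^ (s * (x * q + z)))" for s t
  proof -
    have "herm q d (Y s t) v * Y s t z = (\<Sum>x<d. \<omega> ^ (x * s * q) * I t x * v x * (\<omega> ^ (z * s) * I t z))"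
      unfolding herm_Y Y_def by (rule sum_distrib_right)
    also have "\<dots> = (\<Sum>x<d. G t x * \<omega> ^ (s * (x * q + z)))"
    proof (rule sum.cong[OF refl])
      fix x
      have "s * (x * q + z) = x * s * q + z * s" by (simp add: algebra_simps)
      then have "\<omega> ^ (s * (x * q + z)) = \<omega> ^ (x * s * q) * \<omega> ^ (z * s)" by (simp add: power_add)
      then show "\<omega> ^ (x * s * q) * I t x * v x * (\<omega> ^ (z * s) * I t z) = G t x * \<omega> ^ (s * (x * q + z))"
        unfolding G_def by (simp add: mult_ac)
    qed
    finally show ?thesis .
  qed
  have "(\<Sum>(s, t)\<in>{..<d} \<times> {..<d}. herm q d (Y s t) v * Y s t z)
      = (\<Sum>s<d. \<Sum>t<d. herm q d (Y s t) v * Y s t z)"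
    by (rule sum.cartesian_product[symmetric])
  also have "\<dots> = (\<Sum>s<d. \<Sum>t<d. \<Sum>x<d. G t x * \<omega> ^ (s * (x * q + z)))"
    by (simp only: step1)
  also have "\<dots> = (\<Sum>t<d. \<Sum>s<d. \<Sum>x<d. G t x * \<omega> ^ (s * (x * q + z)))"
    by (rule sum.swap)
  also have "\<dots> = (\<Sum>t<d. \<Sum>x<d. \<Sum>s<d. G t x * \<omega> ^ (s * (x * q + z)))"
    by (rule sum.cong[OF refl], rule sum.swap)
  also have "\<dots> = (\<Sum>t<d. \<Sum>x<d. if x = z then G t z * of_nat d else 0)"
  proof (rule sum.cong[OF refl], rule sum.cong[OF refl])
    fix t x assume "x \<in> {..<d}"
    then have "d dvd x * q + z \<longleftrightarrow> x = z" using dvd_lin[OF dq1] z by auto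
    then show "(\<Sum>s<d. G t x * \<omega> ^ (s * (x * q + z))) = (if x = z then G t z * of_nat d else 0)"
      using geom[of "x * q + z"] by (simp add: sum_distrib_left[symmetric])
  qed
  also have "\<dots> = (\<Sum>t<d. G t z * of_nat d)" using z by simp
  also have "\<dots> = (\<Sum>t<d. I t z * (v z * of_nat d))"
    unfolding G_def I_sq by (simp add: mult_ac)
  also have "\<dots> = (\<Sum>t<d. I t z) * (v z * of_nat d)" by (rule sum_distrib_right[symmetric])
  also have "\<dots> = of_nat (2 * d) * v z" using sumI_t[OF z] by simp
  finally show ?thesis .
qed

lemma span: "\<exists>coef. \<forall>z<d. v z = (\<Sum>(s, t)\<in>{..<d} \<times> {..<d}. coef (s, t) * Y s t z)"
proof -
  have "D \<noteq> {}" using cardD by auto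
  then obtain x0 where x0D: "x0 \<in> D" by blast
  then have x0: "x0 < d" using Dsub by auto
  define zt where "zt = (\<lambda>t. (x0 + t) mod d)"
  define coef where "coef = (\<lambda>(s, t). v (zt t) * \<omega> ^ (zt t * s * (d - 1)) / of_nat d)"
  have "\<forall>z<d. v z = (\<Sum>(s, t)\<in>{..<d} \<times> {..<d}. coef (s, t) * Y s t z)"
  proof (intro allI impI)
    fix z assume z: "z < d"
    define t0 where "t0 = (z + d - x0) mod d"
    have t0d: "t0 < d" unfolding t0_def using d0 by simp
    have key: "t < d \<Longrightarrow> zt t = z \<longleftrightarrow> t = t0" for t
    proof
      assume "t < d" "zt t = z"
      then show "t = t0" unfolding t0_def zt_def using tau_inv1[OF x0, of t] by (simp add: add.commute)
    next
      assume "t < d" "t = t0"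
      then show "zt t = z" unfolding t0_def zt_def using tau_inv2[OF x0 z] by (simp add: add.commute)
    qed
    have dd: "d dvd (d - 1) + 1" using d0 by simp
    have inner: "(\<Sum>s<d. coef (s, t) * Y s t z) = (if t = t0 then v z * I t0 z else 0)" if t: "t < d" for t
    proof -
      have "(\<Sum>s<d. coef (s, t) * Y s t z) = (\<Sum>s<d. (v (zt t) / of_nat d * I t z) * \<omega> ^ (s * (zt t * (d - 1) + z)))"
      proof (rule sum.cong[OF refl])
        fix s
        have "s * (zt t * (d - 1) + z) = zt t * s * (d - 1) + z * s" by (simp add: algebra_simps)
        then have "\<omega> ^ (s * (zt t * (d - 1) + z)) = \<omega> ^ (zt t * s * (d - 1)) * \<omega> ^ (z * s)"
          by (simp add: power_add)
        then show "coef (s, t) * Y s t z = (v (zt t) / of_nat d * I t z) * \<omega> ^ (s * (zt t * (d - 1) + z))"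
          unfolding coef_def Y_def by (simp add: mult_ac)
      qed
      also have "\<dots> = (v (zt t) / of_nat d * I t z) * (\<Sum>s<d. \<omega> ^ (s * (zt t * (d - 1) + z)))"
        by (rule sum_distrib_left[symmetric])
      also have "\<dots> = (v (zt t) / of_nat d * I t z) * (if d dvd zt t * (d - 1) + z then of_nat d else 0)"
        by (simp only: geom)
      also have "(d dvd zt t * (d - 1) + z) \<longleftrightarrow> t = t0"
        using dvd_lin[OF dd, of "zt t" z] z key[OF t] d0 unfolding zt_def by simp
      finally show ?thesis using d_ne0 key[OF t] by auto
    qed
    have "(\<Sum>(s, t)\<in>{..<d} \<times> {..<d}. coef (s, t) * Y s t z) = (\<Sum>s<d. \<Sum>t<d. coef (s, t) * Y s t z)"
      by (rule sum.cartesian_product[symmetric])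
    also have "\<dots> = (\<Sum>t<d. \<Sum>s<d. coef (s, t) * Y s t z)" by (rule sum.swap)
    also have "\<dots> = (\<Sum>t<d. if t = t0 then v z * I t0 z else 0)" by (rule sum.cong) (simp_all add: inner)
    also have "\<dots> = v z * I t0 z" using t0d by simp
    also have "I t0 z = 1" unfolding I_def t0_def using tau_inv3[OF x0 z] x0D by (simp add: indic_def)
    finally show "v z = (\<Sum>(s, t)\<in>{..<d} \<times> {..<d}. coef (s, t) * Y s t z)" by simp
  qed
  then show ?thesis by blast
qed

lemma main_etf:
  "etf q d ({..<d} \<times> {..<d})
           (\<lambda>(s, t). (modM d \<omega> ^^ s) ((shiftT d ^^ t) (indic D)))
           2 1 (of_nat (2 * d))"
proof -
  define yy where "yy = (\<lambda>(s, t). (modM d \<omega> ^^ s) ((shiftT d ^^ t) (indic D)))"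
  define J where "J = {..<d} \<times> {..<d}"
  have Yc: "yy (s, t) x = Y s t x" if "t < d" "x < d" for s t x
    unfolding yy_def using yy_eq that by simp
  have Hc1: "herm q d (yy (s, t)) w = herm q d (Y s t) w" if "t < d" for s t w
    unfolding herm_def by (rule sum.cong) (simp_all add: Yc that)
  have Hc2: "herm q d w (yy (s, t)) = herm q d w (Y s t)" if "t < d" for s t w
    unfolding herm_def by (rule sum.cong) (simp_all add: Yc that)
  have a1: "(2::'a) ^ q = 2" using of_nat_frob[of 2] by simp
  have a2: "(of_nat (2 * d) :: 'a) ^ q = of_nat (2 * d)" by (rule of_nat_frob)
  have sp: "\<exists>coef. \<forall>z<d. v z = (\<Sum>j\<in>J. coef j * yy j z)" for v
  proof -
    obtain coef where c: "\<forall>z<d. v z = (\<Sum>(s, t)\<in>{..<d} \<times> {..<d}. coef (s, t) * Y s t z)"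
      using span by blast
    have "\<forall>z<d. v z = (\<Sum>j\<in>J. coef j * yy j z)"
    proof (intro allI impI)
      fix z assume z: "z < d"
      have "(\<Sum>(s, t)\<in>{..<d} \<times> {..<d}. coef (s, t) * Y s t z) = (\<Sum>j\<in>J. coef j * yy j z)"
        unfolding J_def by (rule sum.cong) (auto simp: Yc z)
      then show "v z = (\<Sum>j\<in>J. coef j * yy j z)" using c z by simp
    qed
    then show ?thesis by blast
  qed
  have fr: "(\<Sum>j\<in>J. herm q d (yy j) v * yy j z) = of_nat (2 * d) * v z" if z: "z < d" for v z
  proof -
    have "(\<Sum>j\<in>J. herm q d (yy j) v * yy j z) = (\<Sum>(s, t)\<in>{..<d} \<times> {..<d}. herm q d (Y s t) v * Y s t z)"
      unfolding J_def by (rule sum.cong) (auto simp: Yc Hc1 z)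
    then show ?thesis using frame[OF z] by simp
  qed
  have sn: "herm q d (yy j) (yy j) = 2" if jJ: "j \<in> J" for j
  proof -
    obtain s t where j: "j = (s, t)" "t < d" using jJ unfolding J_def by auto
    show ?thesis unfolding j(1) using Hc1[OF j(2)] Hc2[OF j(2)] self_norm[OF j(2)] by simp
  qed
  have cr: "herm q d (yy j) (yy l) * herm q d (yy l) (yy j) = 1" if jl: "j \<in> J" "l \<in> J" "j \<noteq> l" for j l
  proof -
    obtain s t where j: "j = (s, t)" "s < d" "t < d" using jl unfolding J_def by auto
    obtain s' t' where l: "l = (s', t')" "s' < d" "t' < d" using jl unfolding J_def by auto
    have e: "herm q d (yy j) (yy l) * herm q d (yy l) (yy j) = herm q d (Y s t) (Y s' t') * herm q d (Y s' t') (Y s t)"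
      unfolding j(1) l(1) using Hc1 Hc2 j l by simp
    show ?thesis
    proof (cases "t = t'")
      case True
      then have "s \<noteq> s'" using jl j l by auto
      then show ?thesis unfolding e True using cross_same_t[OF l(3) j(2) l(2)] by simp
    next
      case False
      then show ?thesis unfolding e using cross_diff_t[OF j(3) l(3)] by simp
    qed
  qed
  show ?thesis
    unfolding etf_def yy_def[symmetric] J_def[symmetric]
    using a1 a2 sp fr sn cr unfolding J_def by auto
qed

end

theorem mainTheorem11:
  fixes p k r q d :: nat and D :: "nat set" and \<alpha> \<omega> :: "'a::{field,finite}"
  assumes "prime p" and "k > 0" and "prime_power r"
    and "p dvd r - 1" and "(r^2 + r + 1) dvd p^k + 1"
    and "q = p ^ k" and "d = r^2 + r + 1"
    and "CARD('a) = q^2"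
    and "cyclic_difference_set d (r + 1) 1 D"
    and "primitive_elem \<alpha>"
    and "\<omega> = \<alpha> ^ ((q^2 - 1) div d)"
  shows "etf q d ({..<d} \<times> {..<d})
           (\<lambda>(s, t). (modM d \<omega> ^^ s) ((shiftT d ^^ t) (indic D)))
           2 1 (of_nat (2 * d))"
proof -
  interpret etfset p k r q d D \<alpha> \<omega>
    using assms by unfold_locales
  show ?thesis by (rule main_etf)
qed

end
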